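(* Let $n\ge 3$ and let $(u,v)$ be an MAB pair of binary words with $|u|=|v|=n$, $i=\mathrm{lsb}(u,v)$, $j=\mathrm{lsb}(v,u)$ and $i+j>n$. Write $u=\alpha\gamma\beta$ and $v=\beta'\gamma'\alpha'$ with $|\alpha|=|\alpha'|=n-i$, $|\gamma|=|\gamma'|=i+j-n$ and $|\beta|=|\beta'|=n-j$. Then: (1) $\big||\alpha|_c-|\alpha'|_c\big|=1$ for all $c\in\{a,b\}$ if and only if $\big||\beta|_c-|\beta'|_c\big|=1$ for all $c\in\{a,b\}$; (2) $\big||\beta|_c-|\beta'|_c\big|=1$ for all $c\in\{a,b\}$ if and only if $i+j-n=1$.
   Context: Let $\Sigma=\{a,b\}$. For a word $w$ and a letter $c$, $|w|_c$ denotes the number of occurrences of $c$ in $w$. Two words $x,y$ are abelian equivalent, written $x\sim_{\mathrm{abl}}y$, if $|x|_c=|y|_c$ for all $c\in\Sigma$. For words $u,v$: a pair $(x,y)$ is an internal abelian-border of $(u,v)$ if $x$ is a nonempty proper suffix of $u$, $y$ is a proper prefix of $v$, and $x\sim_{\mathrm{abl}}y$; it is an external abelian-border of $(u,v)$ if $x$ is a nonempty proper prefix of $u$, $y$ is a proper suffix of $v$, and $x\sim_{\mathrm{abl}}y$. The pair $(u,v)$ is mutually abelian-bordered (MAB) if it has both an internal and an external abelian-border, and mutually abelian-unbordered (MAU) if it has neither. If $(u,v)$ has an internal abelian-border, $\mathrm{sb}(u,v)$ denotes its internal abelian-border $(x,y)$ of minimal length and $\mathrm{lsb}(u,v)=|x|$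 is that minimal length. *)

theory Defs
  imports "HOL-Library.Sublist"
begin

datatype letter = a | b

definition abel_eq :: "letter list \<Rightarrow> letter list \<Rightarrow> bool" where
  "abel_eq x y \<longleftrightarrow> (\<forall>c. count_list x c = count_list y c)"

definition internal_border :: "letter list \<Rightarrow> letter list \<Rightarrow> letter list \<Rightarrow> letter list \<Rightarrow> bool" where
  "internal_border u v x y \<longleftrightarrow>
     x \<noteq> [] \<and> strict_suffix x u \<and> strict_prefix y v \<and> abel_eq x y"

definition external_border :: "letter list \<Rightarrow> letter list \<Rightarrow> letter list \<Rightarrow> letter list \<Rightarrow> bool" where
  "external_border u v x y \<longleftrightarrow>
     x \<noteq> [] \<and> strict_prefix x u \<and> strict_suffix y v \<and> abel_eq x y"

definition has_internal_border :: "letter list \<Rightarrow> letter list \<Rightarrow> bool" where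
  "has_internal_border u v \<longleftrightarrow> (\<exists>x y. internal_border u v x y)"

definition has_external_border :: "letter list \<Rightarrow> letter list \<Rightarrow> bool" where
  "has_external_border u v \<longleftrightarrow> (\<exists>x y. external_border u v x y)"

definition MAB :: "letter list \<Rightarrow> letter list \<Rightarrow> bool" where
  "MAB u v \<longleftrightarrow> has_internal_border u v \<and> has_external_border u v"

text \<open>Length of the shortest internal abelian-border (meaningful when one exists).\<close>
definition lsb :: "letter list \<Rightarrow> letter list \<Rightarrow> nat" where
  "lsb u v = (LEAST k. \<exists>x y. internal_border u v x y \<and> length x = k)"

end

theory Submission
  imports Defs
begin


lemma ivt_aux:
  fixes h :: "nat \<Rightarrow> int"
  assumes "h 0 = 0" "h k = - D" "D = 1 \<or> D = -1" "k \<ge> 2"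
    and step: "\<And>t. t < k \<Longrightarrow> \<bar>h (Suc t) - h t\<bar> \<le> 1"
    and nz: "\<And>t. 0 < t \<Longrightarrow> t < k \<Longrightarrow> h t \<noteq> 0 \<and> h t \<noteq> - D"
  shows False
proof -
  have h1: "h 1 = D" using step[of 0] nz[of 1] assms(1,3,4) by auto
  have "\<forall>t. 1 \<le> t \<longrightarrow> t < k \<longrightarrow> D * h t \<ge> 1"
  proof
    fix t show "1 \<le> t \<longrightarrow> t < k \<longrightarrow> D * h t \<ge> 1"
    proof (induction t)
      case 0 then show ?case by simp
    next
      case (Suc t)
      show ?case
      proof (intro impI)
        assume a: "1 \<le> Suc t" "Suc t < k"
        show "D * h (Suc t) \<ge> 1"
        proof (cases "t = 0")
          case True then show ?thesis using h1 assms(3) by auto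
        next
          case False
          then have "D * h t \<ge> 1" using Suc a by auto
          moreover have "\<bar>h (Suc t) - h t\<bar> \<le> 1" using step a by auto
          moreover have "h (Suc t) \<noteq> 0" using nz a by auto
          ultimately show ?thesis using assms(3) by auto
        qed
      qed
    qed
  qed
  then have "D * h (k - 1) \<ge> 1" using assms(4) by auto
  moreover have "\<bar>h (Suc (k-1)) - h (k-1)\<bar> \<le> 1" using step[of "k-1"] assms(4) by simp
  moreover have "Suc (k-1) = k" using assms(4) by auto
  ultimately show False using assms(2,3) by auto
qed

lemma cnt_sum: "count_list xs a + count_list xs b = length xs"
proof (induction xs)
  case (Cons x xs) then show ?case by (cases x) auto
qed simp

lemma abel_len: "abel_eq x y \<Longrightarrow> length x = length y"
  unfolding abel_eq_def using cnt_sum[of x] cnt_sum[of y] by metis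

lemma abel_iff: "length x = length y \<Longrightarrow> abel_eq x y \<longleftrightarrow> count_list x a = count_list y a"
  unfolding abel_eq_def using cnt_sum[of x] cnt_sum[of y] by (metis add_left_cancel letter.exhaust)

lemma ib_shape:
  assumes "internal_border u v x y" "length u = n" "length v = n"
  shows "0 < length x \<and> length x < n \<and> x = drop (n - length x) u \<and> y = take (length x) v
     \<and> count_list x a = count_list y a"
proof -
  have ab: "abel_eq x y" and ne: "x \<noteq> []" and sx: "strict_suffix x u" and py: "strict_prefix y v"
    using assms(1) unfolding internal_border_def by auto
  have ly: "length y = length x" using abel_len[OF ab] by simp
  obtain zs where u: "u = zs @ x" using sx unfolding strict_suffix_def suffix_def by auto
  obtain ws where v: "v = y @ ws" using py unfolding strict_prefix_def prefix_def by auto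
  have "length x < n" using sx assms(2) u by (auto simp: strict_suffix_def)
  moreover have "x = drop (n - length x) u" using u assms(2) by simp
  moreover have "y = take (length x) v" using v ly by simp
  moreover have "count_list x a = count_list y a" using abel_iff[of x y] ly ab by simp
  ultimately show ?thesis using ne by auto
qed

lemma ib_mk:
  assumes "0 < m" "m < n" "length u = n" "length v = n"
    "count_list (drop (n-m) u) a = count_list (take m v) a"
  shows "internal_border u v (drop (n-m) u) (take m v)"
proof -
  have "abel_eq (drop (n-m) u) (take m v)" using abel_iff assms by simp
  moreover have "strict_suffix (drop (n-m) u) u"
  proof -
    have "length (drop (n-m) u) \<noteq> length u" using assms by simp
    then show ?thesis unfolding strict_suffix_def by (metis suffix_drop)
  qed
  moreover have "strict_prefix (take m v) v"
    using assms unfolding strict_prefix_def by (auto simp: take_is_prefix)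
  moreover have "drop (n-m) u \<noteq> []" using assms by auto
  ultimately show ?thesis unfolding internal_border_def by auto
qed

lemma lsb_facts:
  assumes "has_internal_border u v" "length u = n" "length v = n"
  shows "0 < lsb u v \<and> lsb u v < n \<and>
    count_list (drop (n - lsb u v) u) a = count_list (take (lsb u v) v) a \<and>
    (\<forall>m. 0 < m \<longrightarrow> m < lsb u v \<longrightarrow> count_list (drop (n-m) u) a \<noteq> count_list (take m v) a)"
proof -
  let ?P = "\<lambda>k. \<exists>x y. internal_border u v x y \<and> length x = k"
  obtain x y where "internal_border u v x y" using assms(1) unfolding has_internal_border_def by auto
  then have "?P (length x)" by auto
  then have "?P (lsb u v)" unfolding lsb_def by (rule LeastI)
  then obtain x y where b: "internal_border u v x y" "length x = lsb u v" by auto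
  note sh = ib_shape[OF b(1) assms(2,3)]
  have "\<forall>m. 0 < m \<longrightarrow> m < lsb u v \<longrightarrow> count_list (drop (n-m) u) a \<noteq> count_list (take m v) a"
  proof (intro allI impI notI)
    fix m assume m: "0 < m" "m < lsb u v" "count_list (drop (n-m) u) a = count_list (take m v) a"
    have "m < n" using m sh b by auto
    have "internal_border u v (drop (n-m) u) (take m v)" using ib_mk m \<open>m < n\<close> assms by blast
    moreover have "length (drop (n-m) u) = m" using assms \<open>m < n\<close> by simp
    ultimately have "?P m" by blast
    then have "lsb u v \<le> m" unfolding lsb_def by (rule Least_le)
    then show False using m by simp
  qed
  then show ?thesis using sh b by metis
qed

lemma ext_int: "has_external_border u v \<Longrightarrow> has_internal_border v u"
  unfolding has_external_border_def has_internal_border_def external_border_def internal_border_def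
  abel_eq_def by (metis abel_eq_def abel_len length_0_conv)

lemma bin_diff:
  assumes "length x = length y"
  shows "(\<forall>c. \<bar>int (count_list x c) - int (count_list y c)\<bar> = 1) \<longleftrightarrow>
         \<bar>int (count_list x a) - int (count_list y a)\<bar> = 1"
proof -
  have "int (count_list x b) - int (count_list y b) = - (int (count_list x a) - int (count_list y a))"
    using cnt_sum[of x] cnt_sum[of y] assms by linarith
  then show ?thesis by (metis abs_minus_cancel letter.exhaust)
qed

lemma td_cnt: "count_list (take s xs) c + count_list (drop s xs) c = count_list xs c"
  by (metis append_take_drop_id count_list_append)

lemma main5:
  fixes u v \<alpha> \<gamma> \<beta> \<alpha>' \<gamma>' \<beta>' :: "letter list" and n i j :: nat
  assumes "n \<ge> 3"
    and "MAB u v"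
    and "length u = n" and "length v = n"
    and "i = lsb u v" and "j = lsb v u"
    and "i + j > n"
    and "u = \<alpha> @ \<gamma> @ \<beta>" and "v = \<beta>' @ \<gamma>' @ \<alpha>'"
    and "length \<alpha> = n - i" and "length \<alpha>' = n - i"
    and "length \<gamma> = i + j - n" and "length \<gamma>' = i + j - n"
    and "length \<beta> = n - j" and "length \<beta>' = n - j"
  shows "((\<forall>c. \<bar>int (count_list \<alpha> c) - int (count_list \<alpha>' c)\<bar> = 1) \<longleftrightarrow>
          (\<forall>c. \<bar>int (count_list \<beta> c) - int (count_list \<beta>' c)\<bar> = 1))
       \<and> ((\<forall>c. \<bar>int (count_list \<beta> c) - int (count_list \<beta>' c)\<bar> = 1) \<longleftrightarrow> i + j - n = 1)"
proof -
  have hi: "has_internal_border u v" and hj: "has_internal_border v u"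
    using assms(2) ext_int unfolding MAB_def by auto
  note Li = lsb_facts[OF hi assms(3,4), folded assms(5)]
  note Lj = lsb_facts[OF hj assms(4,3), folded assms(6)]
  note Limin = Li[THEN conjunct2, THEN conjunct2, THEN conjunct2, rule_format]
  note Ljmin = Lj[THEN conjunct2, THEN conjunct2, THEN conjunct2, rule_format]
  define k where "k = i + j - n"
  have k0: "k > 0" using assms(7) k_def by simp
  have ilt: "i < n" "0 < i" "j < n" "0 < j" using Li Lj by auto
  have d1: "drop (n-i) u = \<gamma> @ \<beta>" using assms by simp
  have t1: "take i v = \<beta>' @ \<gamma>'" using assms ilt by simp
  have d2: "drop (n-j) v = \<gamma>' @ \<alpha>'" using assms by simp
  have t2: "take j u = \<alpha> @ \<gamma>" using assms ilt by simp
  define ca where "ca xs = int (count_list xs a)" for xs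
  have E1: "ca \<gamma> + ca \<beta> = ca \<beta>' + ca \<gamma>'" using Li d1 t1 unfolding ca_def by simp
  have E2: "ca \<gamma>' + ca \<alpha>' = ca \<alpha> + ca \<gamma>" using Lj d2 t2 unfolding ca_def by simp
  have "count_list (drop (n-(n-j)) u) a \<noteq> count_list (take (n-j) v) a"
  proof -
    have "0 < n-j" "n-j < i" using ilt assms(7) by auto
    then show ?thesis by (rule Limin)
  qed
  moreover have "drop (n-(n-j)) u = \<beta>" "take (n-j) v = \<beta>'" using assms ilt by auto
  ultimately have Dnz: "ca \<beta> \<noteq> ca \<beta>'" unfolding ca_def by simp
  have P1: "(\<forall>c. \<bar>int (count_list \<beta> c) - int (count_list \<beta>' c)\<bar> = 1) \<longleftrightarrow> \<bar>ca \<beta> - ca \<beta>'\<bar> = 1"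
    using bin_diff[of \<beta> \<beta>'] assms unfolding ca_def by simp
  have P2: "(\<forall>c. \<bar>int (count_list \<alpha> c) - int (count_list \<alpha>' c)\<bar> = 1) \<longleftrightarrow> \<bar>ca \<alpha> - ca \<alpha>'\<bar> = 1"
    using bin_diff[of \<alpha> \<alpha>'] assms unfolding ca_def by simp
  have part2: "\<bar>ca \<beta> - ca \<beta>'\<bar> = 1 \<longleftrightarrow> k = 1"
  proof
    assume k1: "k = 1"
    then obtain g g' where "\<gamma> = [g]" "\<gamma>' = [g']" using assms(12,13) k_def
      by (metis One_nat_def length_0_conv length_Suc_conv)
    then have "\<bar>ca \<gamma> - ca \<gamma>'\<bar> \<le> 1" unfolding ca_def by auto
    then show "\<bar>ca \<beta> - ca \<beta>'\<bar> = 1" using E1 Dnz by linarith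
  next
    assume D1: "\<bar>ca \<beta> - ca \<beta>'\<bar> = 1"
    show "k = 1"
    proof (rule ccontr)
      assume "k \<noteq> 1"
      then have k2: "k \<ge> 2" using k0 by simp
      define D where "D = ca \<beta> - ca \<beta>'"
      define h where "h t = ca (drop (k-t) \<gamma>) - ca (take t \<gamma>')" for t
      have lg: "length \<gamma> = k" "length \<gamma>' = k" using assms k_def by auto
      show False
      proof (rule ivt_aux[of h k D])
        show "h 0 = 0" unfolding h_def ca_def using lg by simp
        show "h k = - D" unfolding h_def D_def using lg E1 by simp
        show "D = 1 \<or> D = -1" using D1 D_def by linarith
        show "k \<ge> 2" by fact
      next
        fix t assume t: "t < k"
        have e1: "drop (k - Suc t) \<gamma> = \<gamma> ! (k - Suc t) # drop (k-t) \<gamma>"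
        proof -
          have "k - Suc t < length \<gamma>" "Suc (k - Suc t) = k - t" using t lg by auto
          then show ?thesis using Cons_nth_drop_Suc by metis
        qed
        have e2: "take (Suc t) \<gamma>' = take t \<gamma>' @ [\<gamma>' ! t]" using t lg by (simp add: take_Suc_conv_app_nth)
        show "\<bar>h (Suc t) - h t\<bar> \<le> 1" unfolding h_def ca_def e1 e2 by auto
      next
        fix t assume t: "0 < t" "t < k"
        have "count_list (drop (n-(n-j+t)) u) a \<noteq> count_list (take (n-j+t) v) a"
          using t k_def ilt by (intro Limin) auto
        moreover have "drop (n-(n-j+t)) u = drop (k-t) \<gamma> @ \<beta>"
        proof -
          have "n-(n-j+t) = length \<alpha> + (k-t)" using assms(10) t k_def ilt by auto
          then show ?thesis using assms(8) lg t by simp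
        qed
        moreover have "take (n-j+t) v = \<beta>' @ take t \<gamma>'" using assms(9,15) lg t by simp
        ultimately have c1: "h t \<noteq> - D" unfolding h_def D_def ca_def by auto
        have "count_list (drop (n-(j-t)) v) a \<noteq> count_list (take (j-t) u) a"
          using t k_def ilt by (intro Ljmin) auto
        moreover have "drop (n-(j-t)) v = drop t \<gamma>' @ \<alpha>'"
        proof -
          have "n-(j-t) = length \<beta>' + t" using assms(15) t k_def ilt by auto
          then show ?thesis using assms(9,15) lg t by simp
        qed
        moreover have "take (j-t) u = \<alpha> @ take (k-t) \<gamma>"
        proof -
          have "j-t = length \<alpha> + (k-t)" using assms(10) t k_def ilt by auto
          then show ?thesis using assms(8) lg t by simp
        qed
        ultimately have "ca (drop t \<gamma>') + ca \<alpha>' \<noteq> ca \<alpha> + ca (take (k-t) \<gamma>)"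
          unfolding ca_def by simp
        moreover have "ca (take t \<gamma>') + ca (drop t \<gamma>') = ca \<gamma>'"
          "ca (take (k-t) \<gamma>) + ca (drop (k-t) \<gamma>) = ca \<gamma>"
          unfolding ca_def using td_cnt by (metis of_nat_add)+
        ultimately have "h t \<noteq> 0" using E2 unfolding h_def by linarith
        then show "h t \<noteq> 0 \<and> h t \<noteq> - D" using c1 by simp
      qed
    qed
  qed
  have "ca \<alpha> - ca \<alpha>' = ca \<beta> - ca \<beta>'" using E1 E2 by linarith
  then show ?thesis using P1 P2 part2 k_def by simp
qed


theorem mainTheorem5:
  fixes u v \<alpha> \<gamma> \<beta> \<alpha>' \<gamma>' \<beta>' :: "letter list" and n i j :: nat
  assumes "n \<ge> 3"
    and "MAB u v"
    and "length u = n" and "length v = n"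
    and "i = lsb u v" and "j = lsb v u"
    and "i + j > n"
    and "u = \<alpha> @ \<gamma> @ \<beta>" and "v = \<beta>' @ \<gamma>' @ \<alpha>'"
    and "length \<alpha> = n - i" and "length \<alpha>' = n - i"
    and "length \<gamma> = i + j - n" and "length \<gamma>' = i + j - n"
    and "length \<beta> = n - j" and "length \<beta>' = n - j"
  shows "((\<forall>c. \<bar>int (count_list \<alpha> c) - int (count_list \<alpha>' c)\<bar> = 1) \<longleftrightarrow>
          (\<forall>c. \<bar>int (count_list \<beta> c) - int (count_list \<beta>' c)\<bar> = 1))
       \<and> ((\<forall>c. \<bar>int (count_list \<beta> c) - int (count_list \<beta>' c)\<bar> = 1) \<longleftrightarrow> i + j - n = 1)"
  using main5[OF assms] .

end
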